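(* Let $\mathcal{X}=\{x_1,\dots,x_n\}$ be a finite set of $n$ categories, let $\mathcal{Q}$ be a set of probability distributions on $\mathcal{X}$, let $\epsilon\in(0,1)$, and let $X=(X_1,\dots,X_p)\in\mathcal{X}^p$. If $$\inf_{Q\in\mathcal{Q}} D(\widehat{P}(X)\,\|\,Q)\;\geq\;\frac{1}{p}\log\left(\frac{1}{\epsilon}\right)+\frac{2n}{p}\log(p+1),$$ then $X$ is contaminated at significance level $\epsilon$ with respect to $\mathcal{Q}$, i.e. $X$ is not typical at significance level $\epsilon$ with respect to $\mathcal{Q}$.
   Context: For $X=(X_1,\dots,X_p)\in\mathcal{X}^p$, the empirical distribution is $\widehat{P}(X)=\frac1p(p_1,\dots,p_n)$ where $p_i=\sum_{j=1}^p\mathbf{1}\{X_j=x_i\}$. An "empirical distribution (of $p$ samples over $n$ categories)" is any vector of this form. For a distribution $Q$ on $\mathcal{X}$ and a set $\mathcal{S}$ of empirical distributions of $p$ samples, $\mathbb{P}_Q(\mathcal{S})$ denotes the probability that $p$ i.i.d. draws from $Q$ have empirical distribution in $\mathcal{S}$. The Kullback–Leibler divergence is $D(P\|Q)=\sum_i P_i\log(P_i/Q_i)$. Typical: let $\widehat{P}^1,\widehat{P}^2,\dots$ be an ordering of all empirical distributions of $p$ samples over the $n$ categories such that $\mathbb{P}_Q(\widehat{P}^1)\le\mathbb{P}_Q(\widehat{P}^2)\le\cdots$ (the ordering depends on $Q$). A sequence $X$ with $\widehat{P}(X)=\widehat{P}^\ell$ is typical at significance level $\epsilon$ with respect to $\mathcal{Q}$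 iff $\sup_{Q\in\mathcal{Q}}\mathbb{P}_Q(\{\widehat{P}^1,\dots,\widehat{P}^\ell\})\ge\epsilon$ for any such ordering. $X$ is contaminated (at significance $\epsilon$ with respect to $\mathcal{Q}$) iff it is not typical. *)

theory Defs
  imports "HOL-Analysis.Analysis"
begin

text \<open>Categories are the elements of a finite type 'a (n = CARD('a)).
  A sample X = (X_1,...,X_p) is a list of length p.\<close>

definition emp_dist :: "'a list \<Rightarrow> ('a \<Rightarrow> real)" where
  "emp_dist xs = (\<lambda>x. real (count_list xs x) / real (length xs))"

definition emp_dists :: "nat \<Rightarrow> ('a \<Rightarrow> real) set" where
  "emp_dists p = {emp_dist xs | xs. length xs = p}"

definition is_distribution :: "('a::finite \<Rightarrow> real) \<Rightarrow> bool" where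
  "is_distribution Q \<longleftrightarrow> (\<forall>x. 0 \<le> Q x) \<and> sum Q UNIV = 1"

text \<open>Probability that p i.i.d. draws from Q have empirical distribution in S.\<close>
definition probQ :: "('a \<Rightarrow> real) \<Rightarrow> nat \<Rightarrow> ('a \<Rightarrow> real) set \<Rightarrow> real" where
  "probQ Q p S = (\<Sum>xs\<in>{xs. length xs = p \<and> emp_dist xs \<in> S}. prod_list (map Q xs))"

definition KL :: "('a::finite \<Rightarrow> real) \<Rightarrow> ('a \<Rightarrow> real) \<Rightarrow> ereal" where
  "KL P Q = (if \<exists>x. P x > 0 \<and> Q x = 0 then \<infinity>
             else ereal (\<Sum>x\<in>{x. P x > 0}. P x * ln (P x / Q x)))"

definition valid_ordering :: "('a \<Rightarrow> real) \<Rightarrow> nat \<Rightarrow> ('a \<Rightarrow> real) list \<Rightarrow> bool" where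
  "valid_ordering Q p L \<longleftrightarrow> distinct L \<and> set L = emp_dists p \<and>
     sorted_wrt (\<lambda>P P'. probQ Q p {P} \<le> probQ Q p {P'}) L"

text \<open>For P = P^l in the list L, the set {P^1, ..., P^l}.\<close>
definition prefix_upto :: "('a \<Rightarrow> real) list \<Rightarrow> ('a \<Rightarrow> real) \<Rightarrow> ('a \<Rightarrow> real) set" where
  "prefix_upto L P = set (takeWhile (\<lambda>P'. P' \<noteq> P) L) \<union> {P}"

definition typical :: "('a \<Rightarrow> real) set \<Rightarrow> real \<Rightarrow> 'a list \<Rightarrow> bool" where
  "typical QQ eps xs \<longleftrightarrow>
     (\<forall>ord. (\<forall>Q\<in>QQ. valid_ordering Q (length xs) (ord Q)) \<longrightarrow>
        (SUP Q\<in>QQ. ereal (probQ Q (length xs) (prefix_upto (ord Q) (emp_dist xs)))) \<ge> ereal eps)"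

definition contaminated :: "('a \<Rightarrow> real) set \<Rightarrow> real \<Rightarrow> 'a list \<Rightarrow> bool" where
  "contaminated QQ eps xs \<longleftrightarrow> \<not> typical QQ eps xs"

end

theory Submission imports Defs "HOL-Library.FuncSet" begin

lemma prod_count:
  fixes Q :: "'a::finite \<Rightarrow> real"
  shows "prod_list (map Q ys) = (\<Prod>x\<in>UNIV. Q x ^ count_list ys x)"
proof (induction ys)
  case Nil then show ?case by simp
next
  case (Cons a ys)
  have "(\<Prod>x\<in>UNIV. Q x ^ count_list (a#ys) x)
      = (\<Prod>x\<in>UNIV. (if x = a then Q x else 1) * Q x ^ count_list ys x)"
    by (rule prod.cong) auto
  also have "\<dots> = Q a * (\<Prod>x\<in>UNIV. Q x ^ count_list ys x)"
    by (simp add: prod.distrib)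
  finally show ?case using Cons by simp
qed

lemma sum_lists:
  fixes f :: "'a::finite \<Rightarrow> real"
  shows "(\<Sum>ys\<in>{ys. length ys = m}. prod_list (map f ys)) = (sum f UNIV) ^ m"
proof (induction m)
  case 0 then show ?case by simp
next
  case (Suc m)
  have eq: "{ys::'a list. length ys = Suc m} = (\<lambda>(a,ys). a#ys) ` (UNIV \<times> {ys. length ys = m})"
    by (auto simp: length_Suc_conv)
  have inj: "inj_on (\<lambda>(a,ys). a#ys) (UNIV \<times> {ys::'a list. length ys = m})"
    by (auto simp: inj_on_def)
  have fin: "finite {ys::'a list. length ys = m}"
    using finite_lists_length_eq[of "UNIV::'a set" m] by simp
  have "(\<Sum>ys\<in>{ys. length ys = Suc m}. prod_list (map f ys))
      = (\<Sum>(a,ys)\<in>UNIV \<times> {ys. length ys = m}. f a * prod_list (map f ys))"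
    unfolding eq by (subst sum.reindex[OF inj]) (simp add: case_prod_beta)
  also have "\<dots> = (\<Sum>a\<in>UNIV. \<Sum>ys\<in>{ys. length ys = m}. f a * prod_list (map f ys))"
    by (simp add: sum.cartesian_product)
  also have "\<dots> = (\<Sum>a\<in>UNIV. f a) * (\<Sum>ys\<in>{ys. length ys = m}. prod_list (map f ys))"
    by (simp add: sum_product)
  finally show ?case using Suc by simp
qed

lemma finite_emp_dists: "finite (emp_dists p :: ('a::finite \<Rightarrow> real) set)"
proof -
  have "emp_dists p = emp_dist ` {xs::'a list. length xs = p}"
    by (auto simp: emp_dists_def)
  moreover have "finite {xs::'a list. length xs = p}"
    using finite_lists_length_eq[of "UNIV::'a set" p] by simp
  ultimately show ?thesis by simp
qed

lemma card_emp_dists: "card (emp_dists p :: ('a::finite \<Rightarrow> real) set) \<le> (p+1) ^ CARD('a)"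
proof -
  let ?F = "(\<lambda>c. \<lambda>x. real (c x) / real p) :: ('a \<Rightarrow> nat) \<Rightarrow> 'a \<Rightarrow> real"
  have "emp_dists p \<subseteq> ?F ` (Pi\<^sub>E UNIV (\<lambda>_. {0..p}))"
  proof
    fix P assume "P \<in> (emp_dists p :: ('a \<Rightarrow> real) set)"
    then obtain xs where xs: "length xs = p" "P = emp_dist xs" by (auto simp: emp_dists_def)
    have "count_list xs \<in> Pi\<^sub>E UNIV (\<lambda>_. {0..p})"
      using count_le_length[of xs] xs by (auto simp: PiE_UNIV_domain)
    then show "P \<in> ?F ` (Pi\<^sub>E UNIV (\<lambda>_. {0..p}))"
      using xs by (auto simp: emp_dist_def)
  qed
  then have "card (emp_dists p :: ('a \<Rightarrow> real) set) \<le> card (?F ` (Pi\<^sub>E UNIV (\<lambda>_. {0..p})))"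
    by (intro card_mono finite_imageI finite_PiE) auto
  also have "\<dots> \<le> card (Pi\<^sub>E (UNIV::'a set) (\<lambda>_. {0..p}))" by (rule card_image_le) (auto intro: finite_PiE)
  also have "\<dots> = (p+1) ^ CARD('a)" by (simp add: card_PiE)
  finally show ?thesis .
qed

lemma single_bound:
  fixes Q :: "'a::finite \<Rightarrow> real" and xs :: "'a list"
  assumes Qd: "is_distribution Q" and p: "length xs = p" "p \<ge> 1"
    and KLb: "KL (emp_dist xs) Q \<ge> ereal B"
  shows "probQ Q p {emp_dist xs} \<le> exp (- real p * B)"
proof -
  define P where "P = emp_dist xs"
  define c where "c = count_list xs"
  define T where "T = {ys::'a list. length ys = p \<and> emp_dist ys \<in> {P}}"
  define A where "A = (\<lambda>R::'a \<Rightarrow> real. \<Prod>x\<in>UNIV. R x ^ c x)"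
  have pp: "real p > 0" using p by simp
  have Pc: "P x = real (c x) / real p" for x using p by (simp add: P_def c_def emp_dist_def)
  have finT: "finite T"
    unfolding T_def
    by (rule finite_subset[OF _ finite_lists_length_eq[of "UNIV::'a set" p]]) auto
  have cnt: "count_list ys = c" if "ys \<in> T" for ys
  proof
    fix x
    from that have "length ys = p" "emp_dist ys = P" by (auto simp: T_def)
    then have "real (count_list ys x) / real p = real (c x) / real p"
      using Pc by (metis emp_dist_def)
    then show "count_list ys x = c x" using pp by (simp add: divide_cancel_right)
  qed
  have prob: "probQ R p {P} = real (card T) * A R" for R
  proof -
    have "probQ R p {P} = (\<Sum>ys\<in>T. A R)"
      unfolding probQ_def T_def[symmetric]
      by (rule sum.cong) (auto simp: A_def prod_count cnt)
    then show ?thesis by simp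
  qed
  have Pnn: "\<And>x. 0 \<le> P x" using Pc by simp
  have sumP: "sum P UNIV = 1"
  proof -
    have "sum P UNIV = (\<Sum>x\<in>UNIV. real (c x)) / real p" using Pc by (simp add: sum_divide_distrib)
    also have "(\<Sum>x\<in>UNIV. real (c x)) = real (sum c UNIV)" by simp
    also have "sum c UNIV = p" unfolding c_def using sum_count_set[of xs UNIV] p by simp
    finally show ?thesis using pp by simp
  qed
  have TP: "real (card T) * A P \<le> 1"
  proof -
    have "real (card T) * A P = probQ P p {P}" by (simp add: prob)
    also have "\<dots> = (\<Sum>ys\<in>T. prod_list (map P ys))" unfolding probQ_def T_def ..
    also have "\<dots> \<le> (\<Sum>ys\<in>{ys. length ys = p}. prod_list (map P ys))"
      by (rule sum_mono2)
        (auto simp: T_def Pnn prod_count intro!: prod_nonneg simp: finite_lists_length_eq[of "UNIV::'a set" p, simplified])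
    also have "\<dots> = 1" by (simp add: sum_lists sumP)
    finally show ?thesis .
  qed
  show ?thesis
  proof (cases "\<exists>x. P x > 0 \<and> Q x = 0")
    case True
    then obtain x where x: "P x > 0" "Q x = 0" by blast
    then have "c x > 0" using Pc pp by (auto simp: zero_less_divide_iff)
    then have "A Q = 0" unfolding A_def using x by (intro prod_zero) auto
    then show ?thesis unfolding P_def[symmetric] by (simp add: prob)
  next
    case False
    define S where "S = {x. P x > 0}"
    define D where "D = (\<Sum>x\<in>S. P x * ln (P x / Q x))"
    have "KL P Q = ereal D" using False by (simp add: KL_def D_def S_def)
    then have DB: "D \<ge> B" using KLb by (simp add: P_def)
    have QS: "Q x > 0" if "x \<in> S" for x
      using False that Qd by (force simp: S_def is_distribution_def less_le)
    have cS: "x \<in> S \<longleftrightarrow> c x > 0" for x using Pc pp by (auto simp: S_def zero_less_divide_iff)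
    have AS: "A R = (\<Prod>x\<in>S. R x ^ c x)" for R
      unfolding A_def by (rule prod.mono_neutral_right) (auto simp: cS)
    have each: "Q x ^ c x = P x ^ c x * exp (- (real (c x) * ln (P x / Q x)))" if "x \<in> S" for x
    proof -
      have px: "P x > 0" using that by (simp add: S_def)
      have qx: "Q x > 0" using QS that by simp
      have "exp (- ln (P x / Q x)) = Q x / P x" using px qx
        by (simp add: exp_minus)
      then have "Q x = P x * exp (- ln (P x / Q x))" using px by simp
      then have "Q x ^ c x = P x ^ c x * exp (- ln (P x / Q x)) ^ c x"
        by (metis power_mult_distrib)
      also have "exp (- ln (P x / Q x)) ^ c x = exp (- (real (c x) * ln (P x / Q x)))"
        by (subst exp_of_nat_mult[symmetric]) simp
      finally show ?thesis .
    qed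
    have "A Q = (\<Prod>x\<in>S. P x ^ c x * exp (- (real (c x) * ln (P x / Q x))))"
      unfolding AS by (rule prod.cong) (auto simp: each)
    also have "\<dots> = A P * exp (\<Sum>x\<in>S. - (real (c x) * ln (P x / Q x)))"
      by (simp add: prod.distrib AS exp_sum)
    also have "(\<Sum>x\<in>S. - (real (c x) * ln (P x / Q x))) = - real p * D"
    proof -
      have "real (c x) = real p * P x" for x using Pc pp by simp
      then show ?thesis by (simp add: D_def sum_distrib_left sum_negf mult.assoc)
    qed
    finally have AQ: "A Q = A P * exp (- real p * D)" .
    have "probQ Q p {P} = real (card T) * A P * exp (- real p * D)" by (simp add: prob AQ)
    also have "\<dots> \<le> 1 * exp (- real p * D)" by (rule mult_right_mono[OF TP]) simp
    also have "\<dots> \<le> exp (- real p * B)" using DB pp by simp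
    finally show ?thesis by (simp add: P_def)
  qed
qed

lemma probQ_nonneg:
  fixes Q :: "'a::finite \<Rightarrow> real"
  assumes "\<And>x. 0 \<le> Q x" shows "0 \<le> probQ Q p X"
  unfolding probQ_def by (rule sum_nonneg) (auto simp: prod_count assms intro!: prod_nonneg)

lemma prefix_bound:
  fixes Q :: "'a::finite \<Rightarrow> real"
  assumes Qnn: "\<And>x. 0 \<le> Q x" and L: "valid_ordering Q p L" and P: "P \<in> emp_dists p"
  shows "probQ Q p (prefix_upto L P) \<le> real (card (emp_dists p :: ('a \<Rightarrow> real) set)) * probQ Q p {P}"
proof -
  define S where "S = prefix_upto L P"
  have setL: "set L = emp_dists p" and sw: "sorted_wrt (\<lambda>P P'. probQ Q p {P} \<le> probQ Q p {P'}) L"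
    using L by (auto simp: valid_ordering_def)
  have PL: "P \<in> set L" using P setL by simp
  have SL: "S \<subseteq> emp_dists p"
    using PL setL by (auto simp: S_def prefix_upto_def dest: set_takeWhileD)
  have finS: "finite S" using SL finite_emp_dists finite_subset by blast
  have nn: "0 \<le> probQ Q p X" for X
    unfolding probQ_def by (rule sum_nonneg) (auto simp: prod_count Qnn intro!: prod_nonneg)
  have le: "probQ Q p {P'} \<le> probQ Q p {P}" if "P' \<in> S" for P'
  proof (cases "P' = P")
    case False
    then have P'in: "P' \<in> set (takeWhile (\<lambda>P'. P' \<noteq> P) L)" using that by (auto simp: S_def prefix_upto_def)
    have "P \<notin> set (takeWhile (\<lambda>P'. P' \<noteq> P) L)" by (auto dest: set_takeWhileD)
    then have "P \<in> set (dropWhile (\<lambda>P'. P' \<noteq> P) L)"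
      using PL takeWhile_dropWhile_id[of "(\<lambda>P'. P' \<noteq> P)" L]
      by (metis Un_iff set_append)
    moreover have "sorted_wrt (\<lambda>P P'. probQ Q p {P} \<le> probQ Q p {P'})
        (takeWhile (\<lambda>P'. P' \<noteq> P) L @ dropWhile (\<lambda>P'. P' \<noteq> P) L)"
      using sw by simp
    ultimately show ?thesis using P'in sw by (metis sorted_wrt_append takeWhile_dropWhile_id)
  qed simp
  define Ys where "Ys = {xs::'a list. length xs = p \<and> emp_dist xs \<in> S}"
  have finYs: "finite Ys" unfolding Ys_def
    by (rule finite_subset[OF _ finite_lists_length_eq[of "UNIV::'a set" p]]) auto
  have "probQ Q p S = (\<Sum>P'\<in>S. \<Sum>ys\<in>{ys\<in>Ys. emp_dist ys = P'}. prod_list (map Q ys))"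
    unfolding probQ_def Ys_def[symmetric]
    by (rule sum.group[symmetric, OF finYs finS]) (auto simp: Ys_def)
  also have "\<dots> = (\<Sum>P'\<in>S. probQ Q p {P'})"
    by (rule sum.cong) (auto simp: probQ_def Ys_def intro!: sum.cong)
  also have "\<dots> \<le> (\<Sum>P'\<in>S. probQ Q p {P})" by (rule sum_mono) (rule le)
  also have "\<dots> = real (card S) * probQ Q p {P}" by simp
  also have "\<dots> \<le> real (card (emp_dists p :: ('a \<Rightarrow> real) set)) * probQ Q p {P}"
    by (rule mult_right_mono[OF _ nn]) (simp add: card_mono[OF finite_emp_dists SL])
  finally show ?thesis by (simp add: S_def)
qed

theorem theorem1:
  fixes QQ :: "('a::finite \<Rightarrow> real) set" and eps :: real and xs :: "'a list"
  assumes "\<forall>Q\<in>QQ. is_distribution Q"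
    and "0 < eps" and "eps < 1"
    and "length xs \<ge> 1"
    and "(INF Q\<in>QQ. KL (emp_dist xs) Q) \<ge>
           ereal (ln (1 / eps) / real (length xs)
                  + 2 * real CARD('a) / real (length xs) * ln (real (length xs) + 1))"
  shows "contaminated QQ eps xs \<and> \<not> typical QQ eps xs"
proof -
  define p where "p = length xs"
  define n where "n = CARD('a)"
  define B where "B = ln (1 / eps) / real p + 2 * real n / real p * ln (real p + 1)"
  define P where "P = emp_dist xs"
  have p1: "p \<ge> 1" using assms(4) by (simp add: p_def)
  have pp: "real p > 0" using p1 by simp
  have n1: "n \<ge> 1" unfolding n_def by (simp add: Suc_leI)
  have KLQ: "KL P Q \<ge> ereal B" if "Q \<in> QQ" for Q
    using assms(5) INF_lower[OF that, of "KL P"] unfolding B_def P_def p_def n_def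
    by (meson order_trans)
  have E: "exp (- real p * B) = eps / (real p + 1) ^ (2 * n)"
  proof -
    have "- real p * B = ln eps - real (2 * n) * ln (real p + 1)"
      using pp assms(2) by (simp add: B_def field_simps ln_div)
    then have "exp (- real p * B) = exp (ln eps) / exp (real (2 * n) * ln (real p + 1))"
      by (simp add: exp_diff)
    also have "\<dots> = eps / (real p + 1) ^ (2 * n)"
      using assms(2) pp exp_of_nat_mult[of "2*n" "ln (real p + 1)"] by simp
    finally show ?thesis .
  qed
  have Pin: "P \<in> emp_dists p" by (auto simp: P_def p_def emp_dists_def)
  define ord where "ord = (\<lambda>Q. sort_key (\<lambda>P'. probQ Q p {P'})
                     (SOME L. distinct L \<and> set L = (emp_dists p :: ('a \<Rightarrow> real) set)))"
  have L0: "distinct (SOME L. distinct L \<and> set L = (emp_dists p :: ('a \<Rightarrow> real) set)) \<and>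
            set (SOME L. distinct L \<and> set L = (emp_dists p :: ('a \<Rightarrow> real) set)) = emp_dists p"
    by (rule someI_ex) (metis finite_distinct_list finite_emp_dists)
  have valid: "valid_ordering Q p (ord Q)" for Q
    unfolding valid_ordering_def ord_def
    using L0 sorted_sort_key[of "\<lambda>P'. probQ Q p {P'}"]
    by (simp add: sorted_wrt_map)
  have pos: "(real p + 1) ^ n \<ge> 2"
  proof -
    have "(2::real) ^ 1 \<le> 2 ^ n" using n1 by (intro power_increasing) auto
    also have "\<dots> \<le> (real p + 1) ^ n" using p1 by (intro power_mono) auto
    finally show ?thesis by simp
  qed
  have bnd: "probQ Q p (prefix_upto (ord Q) P) \<le> eps / 2" if "Q \<in> QQ" for Q
  proof -
    have Qd: "is_distribution Q" using assms(1) that by blast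
    have "probQ Q p (prefix_upto (ord Q) P) \<le> real (card (emp_dists p :: ('a \<Rightarrow> real) set)) * probQ Q p {P}"
      by (rule prefix_bound[OF _ valid Pin]) (use Qd in \<open>simp add: is_distribution_def\<close>)
    also have "\<dots> \<le> (real p + 1) ^ n * (eps / (real p + 1) ^ (2 * n))"
    proof (rule mult_mono)
      show "real (card (emp_dists p :: ('a \<Rightarrow> real) set)) \<le> (real p + 1) ^ n"
        using card_emp_dists[of p, where 'a='a] unfolding n_def
        by (metis of_nat_1 of_nat_add of_nat_le_iff of_nat_power)
      show "probQ Q p {P} \<le> eps / (real p + 1) ^ (2 * n)"
        using single_bound[OF Qd p_def[symmetric] p1 KLQ[OF that, unfolded P_def]] E by (simp add: P_def)
          show "0 \<le> probQ Q p {P}" by (rule probQ_nonneg) (use Qd in \<open>simp add: is_distribution_def\<close>)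
      show "0 \<le> (real p + 1) ^ n" by simp
    qed
    also have "\<dots> = eps / (real p + 1) ^ n"
    proof -
      have "(real p + 1) ^ (2 * n) = (real p + 1) ^ n * (real p + 1) ^ n" by (simp add: mult_2 power_add)
      moreover have "(real p + 1) ^ n > 0" using pp by simp
      ultimately show ?thesis by simp
    qed
    also have "\<dots> \<le> eps / 2"
      using pos assms(2) by (intro divide_left_mono) auto
    finally show ?thesis .
  qed
  have "(SUP Q\<in>QQ. ereal (probQ Q (length xs) (prefix_upto (ord Q) (emp_dist xs)))) \<le> ereal (eps / 2)"
    using bnd by (intro SUP_least) (simp add: p_def P_def)
  also have "\<dots> < ereal eps" using assms(2) by simp
  finally have lt: "(SUP Q\<in>QQ. ereal (probQ Q (length xs) (prefix_upto (ord Q) (emp_dist xs)))) < ereal eps" .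
  have "\<not> typical QQ eps xs"
  proof
    assume "typical QQ eps xs"
    then have "ereal eps \<le> (SUP Q\<in>QQ. ereal (probQ Q (length xs) (prefix_upto (ord Q) (emp_dist xs))))"
      unfolding typical_def using valid by (simp add: p_def)
    then show False using lt by simp
  qed
  then show ?thesis by (simp add: contaminated_def)
qed

end
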